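(* Let $d\ge2$, $p=d-1$, $\lambda>0$, $\sigma>0$, $\mu>0$, and set $u=\mu/\sigma^2$. Let $T$ be inverse Gaussian with mean $\lambda/\mu$ and shape $\lambda^2/\sigma^2$, let $\mathbf Z\sim\mathcal N(\mathbf 0,\mathbf I_p)$ be independent of $T$, and let $\mathbf N=\sigma\sqrt T\,\mathbf Z$ (so $\mathbf N\sim\mathrm{NDFHL}^{(d)}(\lambda,u)$). Define $$\underline h(u)=h(\mathbf N\mid T)=\frac p2\log(2\pi e\sigma^2)+\frac p2\mathbb E[\log T],\qquad \bar h(u)=\frac p2\log\!\left(2\pi e\frac{\lambda}{u}\right).$$ Then $\underline h(u)\le h(\mathbf N)\le\bar h(u)$, and $$0\le h(\mathbf N)-\underline h(u)\le\bar h(u)-\underline h(u)\le\frac p2\bigl(\log\mathbb E[T]-\mathbb E[\log T]\bigr).$$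
   Context: The inverse Gaussian law $IG(\nu,\kappa)$ with mean $\nu>0$ and shape $\kappa>0$ has density $f_T(t)=\sqrt{\kappa/(2\pi t^3)}\exp\!\bigl(-\kappa(t-\nu)^2/(2\nu^2t)\bigr)$, $t>0$. For an integer $d\ge2$, $p=d-1$, $\lambda,u>0$, $\mathrm{NDFHL}^{(d)}(\lambda,u)$ is the law on $\mathbb R^p$ with density $\frac{\lambda}{2^{d/2-1}\pi^{d/2}}\left(\frac{u}{\rho}\right)^{d/2}e^{\lambda u}K_{d/2}(u\rho)$, $\rho=\sqrt{\|\mathbf n\|^2+\lambda^2}$, $K_\nu$ the modified Bessel function of the second kind. $h$ denotes differential entropy; logarithms are natural. *)

theory Defs
  imports "HOL-Analysis.Analysis"
begin

text \<open>Inverse Gaussian density IG(nu, kappa) (mean nu, shape kappa), zero for t <= 0.\<close>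
definition ig_density :: "real \<Rightarrow> real \<Rightarrow> real \<Rightarrow> real" where
  "ig_density nu kappa t =
     (if t > 0 then sqrt (kappa / (2 * pi * t ^ 3)) * exp (- kappa * (t - nu)\<^sup>2 / (2 * nu\<^sup>2 * t))
      else 0)"

definition gauss_density :: "real \<Rightarrow> real ^ 'n \<Rightarrow> real" where
  "gauss_density s x =
     (2 * pi * s) powr (- real CARD('n) / 2) * exp (- (norm x)\<^sup>2 / (2 * s))"

text \<open>Density of N = sg * sqrt T * Z with T ~ IG(nu,kappa), Z ~ N(0,I_p) independent:
  the mixture over T of the conditional Gaussian laws N(0, sg^2 T I_p).\<close>
definition mix_density :: "real \<Rightarrow> real \<Rightarrow> real \<Rightarrow> real ^ 'n \<Rightarrow> real" where
  "mix_density sg nu kappa x =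
     (\<integral>t. ig_density nu kappa t * gauss_density (sg\<^sup>2 * t) x \<partial>lborel)"

definition diff_entropy :: "('a::euclidean_space \<Rightarrow> real) \<Rightarrow> real" where
  "diff_entropy f = - (\<integral>x. f x * ln (f x) \<partial>lborel)"

definition ig_expect :: "real \<Rightarrow> real \<Rightarrow> (real \<Rightarrow> real) \<Rightarrow> real" where
  "ig_expect nu kappa g = (\<integral>t. ig_density nu kappa t * g t \<partial>lborel)"

end

theory Submission
  imports Defs "HOL-Probability.Probability"
begin


lemma card_Basis_vec: "card (Basis :: (real^'n) set) = CARD('n)"
  by simp

lemma gauss_prod:
  fixes x :: "real^'n"
  assumes s: "s > 0"
  shows "gauss_density s x = (\<Prod>b\<in>Basis. normal_density 0 (sqrt s) (x \<bullet> b))"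
proof -
  have n2: "(norm x)\<^sup>2 = (\<Sum>b\<in>Basis. (x \<bullet> b)\<^sup>2)"
    unfolding power2_norm_eq_inner by (subst euclidean_inner) (simp only: power2_eq_square)
  have nd: "\<And>y. normal_density 0 (sqrt s) y = 1 / sqrt (2 * pi * s) * exp (- y\<^sup>2 / (2 * s))"
    using s by (simp add: normal_density_def)
  have "(\<Prod>b\<in>Basis. normal_density 0 (sqrt s) (x \<bullet> b))
      = (\<Prod>b\<in>(Basis::(real^'n) set). 1 / sqrt (2 * pi * s)) * (\<Prod>b\<in>Basis. exp (- (x \<bullet> b)\<^sup>2 / (2 * s)))"
    by (simp only: nd prod.distrib)
  also have "(\<Prod>b\<in>(Basis::(real^'n) set). 1 / sqrt (2 * pi * s)) = (2 * pi * s) powr (- real CARD('n) / 2)"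
  proof -
    have a: "(\<Prod>b\<in>(Basis::(real^'n) set). 1 / sqrt (2 * pi * s)) = (1 / sqrt (2 * pi * s)) ^ CARD('n)"
      by (simp only: prod_constant card_Basis_vec)
    have p: "0 \<le> 2 * pi * s" using s by simp
    have b: "1 / sqrt (2 * pi * s) = (2 * pi * s) powr (- (1 / 2))"
      by (simp only: powr_minus powr_half_sqrt[OF p] inverse_eq_divide)
    have c: "((2 * pi * s) powr (- (1 / 2))) ^ CARD('n) = (2 * pi * s) powr (real CARD('n) * (- (1 / 2)))"
      using s by (intro powr_power) simp
    have d: "real CARD('n) * (- (1 / 2)) = - real CARD('n) / 2" by simp
    have "(\<Prod>b\<in>(Basis::(real^'n) set). 1 / sqrt (2 * pi * s)) = ((2 * pi * s) powr (- (1 / 2))) ^ CARD('n)"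
      unfolding a by (simp only: b)
    also have "\<dots> = (2 * pi * s) powr (- real CARD('n) / 2)"
      unfolding c d ..
    finally show ?thesis .
  qed
  also have "(\<Prod>b\<in>(Basis::(real^'n) set). exp (- (x \<bullet> b)\<^sup>2 / (2 * s))) = exp (- (norm x)\<^sup>2 / (2 * s))"
  proof -
    have "(\<Prod>b\<in>(Basis::(real^'n) set). exp (- (x \<bullet> b)\<^sup>2 / (2 * s))) = exp (\<Sum>b\<in>(Basis::(real^'n) set). - (x \<bullet> b)\<^sup>2 / (2 * s))"
      by (rule exp_sum[symmetric]) simp
    also have "(\<Sum>b\<in>(Basis::(real^'n) set). - (x \<bullet> b)\<^sup>2 / (2 * s)) = - (norm x)\<^sup>2 / (2 * s)"
      unfolding n2 by (simp only: sum_divide_distrib[symmetric] sum_negf)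
    finally show ?thesis .
  qed
  finally show ?thesis unfolding gauss_density_def by (rule sym)
qed

lemma nn_gauss:
  assumes s: "s > 0"
  shows "(\<integral>\<^sup>+x. ennreal (gauss_density s (x::real^'n)) \<partial>lborel) = 1"
proof -
  have "(\<integral>\<^sup>+x. ennreal (gauss_density s (x::real^'n)) \<partial>lborel)
     = (\<integral>\<^sup>+x. (\<Prod>b\<in>Basis. ennreal (normal_density 0 (sqrt s) (x \<bullet> b))) \<partial>(lborel::(real^'n) measure))"
    by (intro nn_integral_cong) (simp add: s gauss_prod prod_ennreal)
  also have "\<dots> = (\<Prod>b\<in>(Basis::(real^'n) set). (\<integral>\<^sup>+y. ennreal (normal_density 0 (sqrt s) y) \<partial>lborel))"
    by (rule nn_integral_lborel_prod) auto
  also have "\<dots> = 1"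
    using s by (simp add: nn_integral_eq_integral)
  finally show ?thesis .
qed

lemma nn_normal_sq:
  assumes s: "s > 0"
  shows "(\<integral>\<^sup>+y. ennreal (y\<^sup>2 * normal_density 0 (sqrt s) y) \<partial>lborel) = ennreal s"
proof -
  have "has_bochner_integral lborel (\<lambda>y. normal_density 0 (sqrt s) y * (y - 0) ^ (2 * 1)) (fact (2 * 1) / ((2 / (sqrt s)\<^sup>2)^1 * fact 1))"
    using s by (intro normal_moment_even) auto
  then have "has_bochner_integral lborel (\<lambda>y. y\<^sup>2 * normal_density 0 (sqrt s) y) s"
    using s by (simp add: mult.commute)
  then show ?thesis
    by (subst nn_integral_eq_integral) (auto simp: has_bochner_integral_iff)
qed

lemma nn_gauss_sq:
  assumes s: "s > 0"
  shows "(\<integral>\<^sup>+x. ennreal (gauss_density s (x::real^'n) * (norm x)\<^sup>2) \<partial>lborel) = ennreal (real CARD('n) * s)"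
proof -
  have n2: "\<And>x::real^'n. (norm x)\<^sup>2 = (\<Sum>b\<in>Basis. (x \<bullet> b)\<^sup>2)"
    unfolding power2_norm_eq_inner by (subst euclidean_inner) (simp add: power2_eq_square)
  have eq: "\<And>x::real^'n. ennreal (gauss_density s x * (norm x)\<^sup>2) = 
     (\<Sum>c\<in>Basis. (\<Prod>b\<in>Basis. ennreal (if b = c then (x \<bullet> b)\<^sup>2 * normal_density 0 (sqrt s) (x \<bullet> b) else normal_density 0 (sqrt s) (x \<bullet> b))))"
  proof -
    fix x :: "real^'n"
    have "gauss_density s x * (norm x)\<^sup>2 = (\<Sum>c\<in>Basis. (x \<bullet> c)\<^sup>2 * (\<Prod>b\<in>Basis. normal_density 0 (sqrt s) (x \<bullet> b)))"
      using s by (simp add: gauss_prod n2 sum_distrib_left sum_distrib_right mult.commute)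
    also have "\<dots> = (\<Sum>c\<in>Basis. (\<Prod>b\<in>Basis. (if b = c then (x \<bullet> b)\<^sup>2 * normal_density 0 (sqrt s) (x \<bullet> b) else normal_density 0 (sqrt s) (x \<bullet> b))))"
    proof (rule sum.cong[OF refl])
      fix c :: "real^'n" assume c: "c \<in> Basis"
      have "(\<Prod>b\<in>Basis. (if b = c then (x \<bullet> b)\<^sup>2 * normal_density 0 (sqrt s) (x \<bullet> b) else normal_density 0 (sqrt s) (x \<bullet> b)))
         = (\<Prod>b\<in>Basis. (if b = c then (x \<bullet> b)\<^sup>2 else 1) * normal_density 0 (sqrt s) (x \<bullet> b))"
        by (intro prod.cong) auto
      also have "\<dots> = (\<Prod>b\<in>Basis. (if b = c then (x \<bullet> b)\<^sup>2 else 1)) * (\<Prod>b\<in>Basis. normal_density 0 (sqrt s) (x \<bullet> b))"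
        by (simp add: prod.distrib)
      also have "(\<Prod>b\<in>Basis. (if b = c then (x \<bullet> b)\<^sup>2 else 1)) = (x \<bullet> c)\<^sup>2"
        using c by (simp add: prod.delta)
      finally show "(x \<bullet> c)\<^sup>2 * (\<Prod>b\<in>Basis. normal_density 0 (sqrt s) (x \<bullet> b)) = (\<Prod>b\<in>Basis. (if b = c then (x \<bullet> b)\<^sup>2 * normal_density 0 (sqrt s) (x \<bullet> b) else normal_density 0 (sqrt s) (x \<bullet> b)))"
        by simp
    qed
    finally show "ennreal (gauss_density s x * (norm x)\<^sup>2) = 
     (\<Sum>c\<in>Basis. (\<Prod>b\<in>Basis. ennreal (if b = c then (x \<bullet> b)\<^sup>2 * normal_density 0 (sqrt s) (x \<bullet> b) else normal_density 0 (sqrt s) (x \<bullet> b))))"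
      by (simp add: prod_ennreal[symmetric] sum_ennreal[symmetric] prod_nonneg sum_nonneg)
  qed
  have "(\<integral>\<^sup>+x. ennreal (gauss_density s (x::real^'n) * (norm x)\<^sup>2) \<partial>lborel)
     = (\<Sum>c\<in>Basis. (\<integral>\<^sup>+x. (\<Prod>b\<in>Basis. ennreal (if b = c then (x \<bullet> b)\<^sup>2 * normal_density 0 (sqrt s) (x \<bullet> b) else normal_density 0 (sqrt s) (x \<bullet> b))) \<partial>(lborel::(real^'n) measure)))"
    unfolding eq by (subst nn_integral_sum) auto
  also have "\<dots> = (\<Sum>c\<in>(Basis::(real^'n) set). (\<Prod>b\<in>Basis. (\<integral>\<^sup>+y. ennreal (if b = c then y\<^sup>2 * normal_density 0 (sqrt s) y else normal_density 0 (sqrt s) y) \<partial>lborel)))"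
    by (intro sum.cong refl nn_integral_lborel_prod) auto
  also have "\<dots> = (\<Sum>c\<in>(Basis::(real^'n) set). (\<Prod>b\<in>Basis. (if b = c then ennreal s else 1)))"
    using s by (intro sum.cong prod.cong refl) (auto simp: nn_normal_sq nn_integral_eq_integral)
  also have "\<dots> = (\<Sum>c\<in>(Basis::(real^'n) set). ennreal s)"
    by (intro sum.cong refl) (simp add: prod.delta)
  also have "\<dots> = ennreal (real CARD('n) * s)"
    using s by (simp add: ennreal_of_nat_eq_real_of_nat ennreal_mult)
  finally show ?thesis .
qed



lemma gauss_abs_int: "(\<lambda>u::real. exp (- u\<^sup>2)) absolutely_integrable_on UNIV \<and> integral UNIV (\<lambda>u::real. exp (- u\<^sup>2)) = sqrt pi"
proof -
  have nd: "\<And>x. normal_density 0 (sqrt (1/2)) x = exp (- x\<^sup>2) / sqrt pi"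
    by (simp add: normal_density_def real_sqrt_divide power_divide)
  have "has_bochner_integral lborel (normal_density 0 (sqrt (1/2))) 1"
    by (simp add: has_bochner_integral_iff)
  then have "has_bochner_integral lborel (\<lambda>x. sqrt pi * normal_density 0 (sqrt (1/2)) x) (sqrt pi * 1)"
    by (rule has_bochner_integral_mult_right)
  then have hb: "has_bochner_integral lborel (\<lambda>x::real. exp (- x\<^sup>2)) (sqrt pi)"
    by (simp add: nd)
  then have "((\<lambda>x::real. exp (- x\<^sup>2)) has_integral sqrt pi) UNIV"
    using has_integral_integral_lborel[of "\<lambda>x::real. exp (- x\<^sup>2)"] by (auto simp: has_bochner_integral_iff)
  then show ?thesis
    by (auto simp: absolutely_integrable_on_iff_nonneg integral_unique intro: has_integral_integrable)
qed

definition gsub :: "real \<Rightarrow> real \<Rightarrow> real \<Rightarrow> real" where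
  "gsub a b t = sqrt a * sqrt t - sqrt b / sqrt t"

lemma gsub_deriv:
  assumes "t > 0"
  shows "(gsub a b has_field_derivative (sqrt a / (2 * sqrt t) + sqrt b / (2 * t * sqrt t))) (at t within S)"
proof -
  have "(gsub a b has_field_derivative (sqrt a * (inverse (sqrt t) / 2) - (- (sqrt b * (inverse (sqrt t) / 2) / (sqrt t * sqrt t))))) (at t within S)"
    unfolding gsub_def using assms
    by (auto intro!: derivative_eq_intros)
  moreover have "sqrt a * (inverse (sqrt t) / 2) - (- (sqrt b * (inverse (sqrt t) / 2) / (sqrt t * sqrt t)))
     = sqrt a / (2 * sqrt t) + sqrt b / (2 * t * sqrt t)"
    using assms by (simp add: field_simps)
  ultimately show ?thesis by simp
qed

lemma gsub_mono:
  assumes "a > 0" "b > 0" "0 < s" "s < t"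
  shows "gsub a b s < gsub a b t"
proof -
  have "sqrt s < sqrt t" using assms by simp
  moreover have "sqrt b / sqrt t < sqrt b / sqrt s"
    using assms by (intro divide_strict_left_mono) auto
  moreover have "sqrt a * sqrt s < sqrt a * sqrt t"
    using assms \<open>sqrt s < sqrt t\<close> by (intro mult_strict_left_mono) auto
  ultimately show ?thesis unfolding gsub_def by linarith
qed

lemma gsub_inj:
  assumes "a > 0" "b > 0"
  shows "inj_on (gsub a b) {0<..}"
proof (rule inj_onI)
  fix s t :: real assume "s \<in> {0<..}" "t \<in> {0<..}" "gsub a b s = gsub a b t"
  then show "s = t" using gsub_mono[OF assms, of s t] gsub_mono[OF assms, of t s]
    by (cases s t rule: linorder_cases) auto
qed

lemma gsub_surj:
  assumes a: "a > 0" and b: "b > 0"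
  shows "gsub a b ` {0<..} = UNIV"
proof -
  have "u \<in> gsub a b ` {0<..}" for u
  proof -
    define x where "x = (u + sqrt (u\<^sup>2 + 4 * sqrt a * sqrt b)) / (2 * sqrt a)"
    have d: "sqrt (u\<^sup>2 + 4 * sqrt a * sqrt b) > \<bar>u\<bar>"
      using a b by (intro real_less_rsqrt) (simp add: power2_abs)
    have x: "x > 0" unfolding x_def using a d by (intro divide_pos_pos) auto
    have sq: "(sqrt (u\<^sup>2 + 4 * sqrt a * sqrt b))\<^sup>2 = u\<^sup>2 + 4 * sqrt a * sqrt b"
      using a b by (intro real_sqrt_pow2) (auto intro: add_nonneg_nonneg)
    have "sqrt a * x * x - u * x - sqrt b = 0"
      unfolding x_def using a sq by (simp add: field_simps power2_eq_square) 
    then have "sqrt a * x - sqrt b / x = u"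
      using x by (simp add: field_simps)
    moreover have "sqrt (x\<^sup>2) = x" using x by simp
    ultimately have "gsub a b (x\<^sup>2) = u" unfolding gsub_def by simp
    then show ?thesis using x by (intro image_eqI[of _ _ "x\<^sup>2"]) auto
  qed
  then show ?thesis by auto
qed

lemma step1:
  assumes a: "a > 0" and b: "b > 0"
  shows "((\<lambda>t. (sqrt a / (2 * sqrt t) + sqrt b / (2 * t * sqrt t)) * exp (- (gsub a b t)\<^sup>2)) has_integral sqrt pi) {0<..}"
proof -
  have "(\<lambda>t. \<bar>sqrt a / (2 * sqrt t) + sqrt b / (2 * t * sqrt t)\<bar> * exp (- (gsub a b t)\<^sup>2)) absolutely_integrable_on {0<..} \<and>
        integral {0<..} (\<lambda>t. \<bar>sqrt a / (2 * sqrt t) + sqrt b / (2 * t * sqrt t)\<bar> * exp (- (gsub a b t)\<^sup>2)) = sqrt pi"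
    by (rule has_absolute_integral_change_of_variables_1'[THEN iffD2])
       (use gauss_abs_int gsub_deriv gsub_inj[OF a b] gsub_surj[OF a b] in auto)
  moreover have "\<And>t. t \<in> {0<..} \<Longrightarrow> \<bar>sqrt a / (2 * sqrt t) + sqrt b / (2 * t * sqrt t)\<bar> = sqrt a / (2 * sqrt t) + sqrt b / (2 * t * sqrt t)"
    using a b by auto
  ultimately have h: "((\<lambda>t. \<bar>sqrt a / (2 * sqrt t) + sqrt b / (2 * t * sqrt t)\<bar> * exp (- (gsub a b t)\<^sup>2)) has_integral sqrt pi) {0<..}"
    by (simp add: has_integral_integrable_integral absolutely_integrable_on_def)
  show ?thesis
    by (rule has_integral_cong[THEN iffD1, OF _ h]) (use a b in auto)
qed

lemma gsub_sq:
  assumes "a > 0" "b > 0" "t > 0"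
  shows "exp (- (gsub a b t)\<^sup>2) = exp (2 * sqrt (a * b)) * exp (- a * t - b / t)"
proof -
  have "(gsub a b t)\<^sup>2 = a * t - 2 * sqrt (a * b) + b / t"
    unfolding gsub_def using assms
    by (simp add: power2_eq_square field_simps real_sqrt_mult)
  then show ?thesis by (simp add: exp_add[symmetric])
qed

lemma nn_fin_has_integral:
  fixes f :: "real \<Rightarrow> real"
  assumes [measurable]: "f \<in> borel_measurable borel" "S \<in> sets borel"
    and nn: "\<And>x. x \<in> S \<Longrightarrow> 0 \<le> f x"
    and fin: "(\<integral>\<^sup>+x. ennreal (f x) * indicator S x \<partial>lborel) < \<infinity>"
  shows "(f has_integral enn2real (\<integral>\<^sup>+x. ennreal (f x) * indicator S x \<partial>lborel)) S"
proof -
  have eq: "(\<integral>\<^sup>+x. ennreal (f x) * indicator S x \<partial>lborel) = (\<integral>\<^sup>+x. ennreal (indicator S x * f x) \<partial>lborel)"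
    by (intro nn_integral_cong) (auto simp: indicator_def)
  have fin': "(\<integral>\<^sup>+x. ennreal (indicator S x * f x) \<partial>lborel) < \<infinity>" using fin eq by simp
  have "((\<lambda>x. indicator S x * f x) has_integral enn2real (\<integral>\<^sup>+x. ennreal (indicator S x * f x) \<partial>lborel)) UNIV"
    apply (rule nn_integral_has_integral)
    using nn fin' by (auto simp: indicator_def ennreal_enn2real)
  moreover have "(\<lambda>x. indicator S x * f x) = (\<lambda>x. if x \<in> S then f x else 0)"
    by (auto simp: indicator_def)
  ultimately show ?thesis unfolding eq using has_integral_restrict_UNIV by metis
qed

lemma J_both:
  assumes a: "a > 0" and b: "b > 0"
  shows "((\<lambda>t. exp (- a * t - b / t) / (t * sqrt t)) has_integral (sqrt pi / sqrt b * exp (- 2 * sqrt (a * b)))) {0<..}"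
    and "((\<lambda>t. exp (- a * t - b / t) / sqrt t) has_integral (sqrt pi / sqrt a * exp (- 2 * sqrt (a * b)))) {0<..}"
proof -
  define F1 where "F1 t = exp (- a * t - b / t) / sqrt t" for t
  define F3 where "F3 t = exp (- a * t - b / t) / (t * sqrt t)" for t
  define K where "K = 2 * sqrt pi * exp (- 2 * sqrt (a * b))"
  have [measurable]: "F1 \<in> borel_measurable borel" "F3 \<in> borel_measurable borel"
    unfolding F1_def[abs_def] F3_def[abs_def] by measurable
  have F1nn: "\<And>t. t \<in> {0<..} \<Longrightarrow> 0 \<le> F1 t" and F3nn: "\<And>t. t \<in> {0<..} \<Longrightarrow> 0 \<le> F3 t"
    by (auto simp: F1_def F3_def)
  have "((\<lambda>t. (2 * exp (- 2 * sqrt (a * b))) * ((sqrt a / (2 * sqrt t) + sqrt b / (2 * t * sqrt t)) * exp (- (gsub a b t)\<^sup>2))) has_integral (2 * exp (- 2 * sqrt (a * b))) * sqrt pi) {0<..}"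
    by (intro has_integral_mult_right step1 a b)
  note A = this
  have eqpt: "\<And>t. t \<in> {0<..} \<Longrightarrow> (2 * exp (- 2 * sqrt (a * b))) * ((sqrt a / (2 * sqrt t) + sqrt b / (2 * t * sqrt t)) * exp (- (gsub a b t)\<^sup>2))
      = sqrt a * F1 t + sqrt b * F3 t"
  proof -
    fix t :: real assume t: "t \<in> {0<..}"
    define E where "E = exp (- a * t - b / t)"
    define q where "q = exp (- 2 * sqrt (a * b))"
    define Q where "Q = exp (2 * sqrt (a * b))"
    have ee: "q * Q = 1" by (simp add: q_def Q_def exp_add[symmetric])
    have "(2 * exp (- 2 * sqrt (a * b))) * ((sqrt a / (2 * sqrt t) + sqrt b / (2 * t * sqrt t)) * exp (- (gsub a b t)\<^sup>2))
        = 2 * q * ((sqrt a / (2 * sqrt t) + sqrt b / (2 * t * sqrt t)) * (Q * E))"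
      using gsub_sq[OF a b, of t] t by (simp add: q_def Q_def E_def)
    also have "\<dots> = (q * Q) * (sqrt a * (E / sqrt t) + sqrt b * (E / (t * sqrt t)))"
      using t by (simp add: field_simps)
    also have "\<dots> = sqrt a * F1 t + sqrt b * F3 t"
      by (simp add: ee F1_def F3_def E_def)
    finally show "(2 * exp (- 2 * sqrt (a * b))) * ((sqrt a / (2 * sqrt t) + sqrt b / (2 * t * sqrt t)) * exp (- (gsub a b t)\<^sup>2))
      = sqrt a * F1 t + sqrt b * F3 t" .
  qed
  have hsum0: "((\<lambda>t. sqrt a * F1 t + sqrt b * F3 t) has_integral (2 * exp (- 2 * sqrt (a * b))) * sqrt pi) {0<..}"
    by (rule has_integral_cong[THEN iffD1, OF _ A]) (use eqpt in auto)
  then have hsum: "((\<lambda>t. sqrt a * F1 t + sqrt b * F3 t) has_integral K) {0<..}"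
    by (simp add: K_def mult_ac)
  have nnsum: "\<And>t. t \<in> {0<..} \<Longrightarrow> 0 \<le> sqrt a * F1 t + sqrt b * F3 t"
    using F1nn F3nn a b by (auto intro!: add_nonneg_nonneg mult_nonneg_nonneg)
  have eqK: "(\<integral>\<^sup>+t. ennreal (sqrt a * F1 t + sqrt b * F3 t) * indicator {0<..} t \<partial>lborel) = ennreal K"
    by (rule nn_integral_has_integral_lebesgue'[OF nnsum hsum])
  have split: "(\<integral>\<^sup>+t. ennreal (sqrt a * F1 t + sqrt b * F3 t) * indicator {0<..} t \<partial>lborel)
     = ennreal (sqrt a) * (\<integral>\<^sup>+t. ennreal (F1 t) * indicator {0<..} t \<partial>lborel) + ennreal (sqrt b) * (\<integral>\<^sup>+t. ennreal (F3 t) * indicator {0<..} t \<partial>lborel)"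
  proof -
    have "(\<integral>\<^sup>+t. ennreal (sqrt a * F1 t + sqrt b * F3 t) * indicator {0<..} t \<partial>lborel)
      = (\<integral>\<^sup>+t. ennreal (sqrt a) * (ennreal (F1 t) * indicator {0<..} t) + ennreal (sqrt b) * (ennreal (F3 t) * indicator {0<..} t) \<partial>lborel)"
    proof (rule nn_integral_cong)
      fix t :: real
      show "ennreal (sqrt a * F1 t + sqrt b * F3 t) * indicator {0<..} t = ennreal (sqrt a) * (ennreal (F1 t) * indicator {0<..} t) + ennreal (sqrt b) * (ennreal (F3 t) * indicator {0<..} t)"
      proof (cases "t > 0")
        case True
        then have "0 \<le> F1 t" "0 \<le> F3 t" using F1nn F3nn by auto
        then show ?thesis using True a b by (simp add: ennreal_mult ennreal_plus)
      next
        case False then show ?thesis by simp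
      qed
    qed
    also have "\<dots> = (\<integral>\<^sup>+t. ennreal (sqrt a) * (ennreal (F1 t) * indicator {0<..} t) \<partial>lborel) + (\<integral>\<^sup>+t. ennreal (sqrt b) * (ennreal (F3 t) * indicator {0<..} t) \<partial>lborel)"
      by (rule nn_integral_add) auto
    also have "\<dots> = ennreal (sqrt a) * (\<integral>\<^sup>+t. ennreal (F1 t) * indicator {0<..} t \<partial>lborel) + ennreal (sqrt b) * (\<integral>\<^sup>+t. ennreal (F3 t) * indicator {0<..} t \<partial>lborel)"
      by (simp add: nn_integral_cmult)
    finally show ?thesis .
  qed
  have "ennreal (sqrt b) * (\<integral>\<^sup>+t. ennreal (F3 t) * indicator {0<..} t \<partial>lborel) \<le> ennreal (sqrt a) * (\<integral>\<^sup>+t. ennreal (F1 t) * indicator {0<..} t \<partial>lborel) + ennreal (sqrt b) * (\<integral>\<^sup>+t. ennreal (F3 t) * indicator {0<..} t \<partial>lborel)"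
    by (rule add_increasing) auto
  also have "\<dots> = ennreal K" by (rule trans[OF split[symmetric] eqK])
  finally have le: "ennreal (sqrt b) * (\<integral>\<^sup>+t. ennreal (F3 t) * indicator {0<..} t \<partial>lborel) \<le> ennreal K" .
  have "ennreal (sqrt b) * (\<integral>\<^sup>+t. ennreal (F3 t) * indicator {0<..} t \<partial>lborel) < \<infinity>"
    using le by (rule le_less_trans) simp
  then have fin3: "(\<integral>\<^sup>+t. ennreal (F3 t) * indicator {0<..} t \<partial>lborel) < \<infinity>"
    using b by (auto simp: ennreal_mult_less_top)
  define r3 where "r3 = enn2real (\<integral>\<^sup>+t. ennreal (F3 t) * indicator {0<..} t \<partial>lborel)"
  have h3: "(F3 has_integral r3) {0<..}"
    unfolding r3_def using F3nn fin3 by (intro nn_fin_has_integral) auto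
  define c where "c = b / a"
  have c: "c > 0" using a b by (simp add: c_def)
  have hder: "\<And>r. r \<in> {0<..} \<Longrightarrow> ((\<lambda>r. c / r) has_field_derivative (- c / r\<^sup>2)) (at r within {0<..})"
    by (auto intro!: derivative_eq_intros simp: power2_eq_square field_simps)
  have hinj: "inj_on (\<lambda>r. c / r) {0<..}"
    using c by (auto intro!: inj_onI simp: field_simps)
  have himg: "(\<lambda>r. c / r) ` {0<..} = {0<..}"
  proof -
    have "t \<in> (\<lambda>r. c / r) ` {0<..}" if "t > 0" for t
      using c that by (intro image_eqI[of _ _ "c / t"]) auto
    then show ?thesis using c by auto
  qed
  have eqF: "\<bar>- c / r\<^sup>2\<bar> * F1 (c / r) = sqrt c * F3 r" if r: "r > 0" for r
  proof -
    have e: "exp (- a * (c / r) - b / (c / r)) = exp (- a * r - b / r)"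
      using a b r by (simp add: c_def field_simps)
    have q: "\<bar>- c / r\<^sup>2\<bar> / sqrt (c / r) = sqrt c / (r * sqrt r)"
      using c r by (simp add: real_sqrt_divide field_simps power2_eq_square)
    have "\<bar>- c / r\<^sup>2\<bar> * F1 (c / r) = (\<bar>- c / r\<^sup>2\<bar> / sqrt (c / r)) * exp (- a * (c / r) - b / (c / r))"
      by (simp add: F1_def)
    also have "\<dots> = sqrt c / (r * sqrt r) * exp (- a * r - b / r)"
      by (simp only: q e)
    also have "\<dots> = sqrt c * F3 r"
      by (simp add: F3_def)
    finally show ?thesis .
  qed
  have "(\<lambda>r. \<bar>- c / r\<^sup>2\<bar> * F1 (c / r)) absolutely_integrable_on {0<..} \<and> integral {0<..} (\<lambda>r. \<bar>- c / r\<^sup>2\<bar> * F1 (c / r)) = sqrt c * r3"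
  proof -
    have h3': "((\<lambda>r. sqrt c * F3 r) has_integral sqrt c * r3) {0<..}"
      by (intro has_integral_mult_right h3)
    have h3'': "((\<lambda>r. \<bar>- c / r\<^sup>2\<bar> * F1 (c / r)) has_integral sqrt c * r3) {0<..}"
      by (rule has_integral_cong[THEN iffD1, OF _ h3'], rule sym, rule eqF) simp
    have "(\<lambda>r. \<bar>- c / r\<^sup>2\<bar> * F1 (c / r)) absolutely_integrable_on {0<..}"
      using h3'' F1nn c by (subst absolutely_integrable_on_iff_nonneg) (auto intro: has_integral_integrable)
    then show ?thesis using h3'' by (simp add: integral_unique)
  qed
  then have "F1 absolutely_integrable_on {0<..} \<and> integral {0<..} F1 = sqrt c * r3"
    using has_absolute_integral_change_of_variables_1'[OF _ hder hinj] himg by simp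
  then have h1: "(F1 has_integral sqrt c * r3) {0<..}"
    using set_lebesgue_integral_eq_integral(1) has_integral_integrable_integral by blast
  have "((\<lambda>t. sqrt a * F1 t + sqrt b * F3 t) has_integral sqrt a * (sqrt c * r3) + sqrt b * r3) {0<..}"
    by (intro has_integral_add has_integral_mult_right h1 h3)
  then have "sqrt a * (sqrt c * r3) + sqrt b * r3 = K"
    using hsum has_integral_unique by blast
  moreover have "sqrt a * sqrt c = sqrt b"
    using a b by (simp add: c_def real_sqrt_divide)
  ultimately have "2 * sqrt b * r3 = K" by (simp add: algebra_simps)
  then have r3v: "r3 = sqrt pi / sqrt b * exp (- 2 * sqrt (a * b))"
    using b unfolding K_def by (simp add: field_simps)
  show "((\<lambda>t. exp (- a * t - b / t) / (t * sqrt t)) has_integral (sqrt pi / sqrt b * exp (- 2 * sqrt (a * b)))) {0<..}"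
    using h3 r3v by (simp add: F3_def[abs_def])
  have cc: "sqrt c * (sqrt pi / sqrt b) = sqrt pi / sqrt a"
    using a b by (simp add: c_def real_sqrt_divide field_simps)
  have v: "sqrt c * r3 = sqrt pi / sqrt a * exp (- 2 * sqrt (a * b))"
    unfolding r3v mult.assoc[symmetric] cc ..
  from h1 have "(F1 has_integral (sqrt pi / sqrt a * exp (- 2 * sqrt (a * b)))) {0<..}"
    unfolding v .
  then show "((\<lambda>t. exp (- a * t - b / t) / sqrt t) has_integral (sqrt pi / sqrt a * exp (- 2 * sqrt (a * b)))) {0<..}"
    unfolding F1_def[abs_def] .
qed



lemma hk_to_bochner:
  fixes f :: "real \<Rightarrow> real"
  assumes "f \<in> borel_measurable borel" "\<And>x. 0 \<le> f x" "(f has_integral I) UNIV"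
  shows "has_bochner_integral lborel f I"
proof -
  have "integral\<^sup>N lborel f = I" by (rule nn_integral_has_integral_lborel[OF assms])
  moreover have "0 \<le> I" using assms(2,3) has_integral_nonneg by blast
  ultimately show ?thesis
    using assms by (intro has_bochner_integral_nn_integral) auto
qed

lemma hk_to_bochner_pos:
  fixes f :: "real \<Rightarrow> real"
  assumes [measurable]: "f \<in> borel_measurable borel" and nn: "\<And>x. x > 0 \<Longrightarrow> 0 \<le> f x" and h: "(f has_integral I) {0<..}"
  shows "has_bochner_integral lborel (\<lambda>x. indicator {0<..} x * f x) I"
proof -
  have e: "(\<lambda>x. indicator {0<..} x * f x) = (\<lambda>x. if x \<in> {0<..} then f x else 0)"
    by (auto simp: indicator_def)
  show ?thesis unfolding e
    apply (rule hk_to_bochner)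
    using nn has_integral_restrict_UNIV[of "{0<..}" f I] h by auto
qed

lemma ig_measurable[measurable]: "ig_density nu kappa \<in> borel_measurable borel"
  unfolding ig_density_def[abs_def] by measurable


context
  fixes nu kappa :: real
  assumes nu: "nu > 0" and kappa: "kappa > 0"
begin

lemma ig_nonneg: "0 \<le> ig_density nu kappa t"
  using kappa by (simp add: ig_density_def)

definition "igA = kappa / (2 * nu\<^sup>2)"
definition "igB = kappa / 2"
definition "igC = sqrt (kappa / (2 * pi)) * exp (kappa / nu)"

lemma igAB: "igA > 0" "igB > 0" "igC > 0" "sqrt (igA * igB) = kappa / (2 * nu)"
proof -
  show "igA > 0" "igB > 0" "igC > 0" using nu kappa by (auto simp: igA_def igB_def igC_def)
  have "igA * igB = (kappa / (2 * nu))\<^sup>2" by (simp add: igA_def igB_def power2_eq_square field_simps)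
  then show "sqrt (igA * igB) = kappa / (2 * nu)" using nu kappa by simp
qed

lemma ig_form:
  assumes t: "t > 0"
  shows "ig_density nu kappa t = igC * (exp (- igA * t - igB / t) / (t * sqrt t))"
proof -
  have s: "sqrt (kappa / (2 * pi * t ^ 3)) = sqrt (kappa / (2 * pi)) / (t * sqrt t)"
  proof -
    have "t ^ 3 = (t * sqrt t)\<^sup>2" using t by (simp add: power2_eq_square power3_eq_cube)
    then have "sqrt (kappa / (2 * pi * t ^ 3)) = sqrt (kappa / (2 * pi)) / sqrt ((t * sqrt t)\<^sup>2)"
      by (simp add: real_sqrt_divide real_sqrt_mult)
    then show ?thesis using t by simp
  qed
  have e: "- kappa * (t - nu)\<^sup>2 / (2 * nu\<^sup>2 * t) = kappa / nu + (- igA * t - igB / t)"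
    using t nu by (simp add: igA_def igB_def power2_eq_square field_simps)
  have "ig_density nu kappa t = sqrt (kappa / (2 * pi * t ^ 3)) * exp (- kappa * (t - nu)\<^sup>2 / (2 * nu\<^sup>2 * t))"
    using t by (simp add: ig_density_def)
  also have "\<dots> = sqrt (kappa / (2 * pi)) / (t * sqrt t) * (exp (kappa / nu) * exp (- igA * t - igB / t))"
    by (simp only: s e exp_add)
  finally show ?thesis by (simp add: igC_def)
qed

lemma ig_total: "has_bochner_integral lborel (ig_density nu kappa) 1"
proof -
  have h: "((\<lambda>t. igC * (exp (- igA * t - igB / t) / (t * sqrt t))) has_integral igC * (sqrt pi / sqrt igB * exp (- 2 * sqrt (igA * igB)))) {0<..}"
    by (intro has_integral_mult_right J_both igAB)
  have eq: "igC * (sqrt pi / sqrt igB * exp (- 2 * sqrt (igA * igB))) = 1"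
  proof -
    have a1: "sqrt (kappa / (2 * pi)) * sqrt pi / sqrt (kappa / 2) = 1"
      using kappa by (simp add: real_sqrt_divide real_sqrt_mult)
    have b1: "exp (kappa / nu) * exp (- 2 * (kappa / (2 * nu))) = 1"
      by (simp add: exp_add[symmetric])
    have c1: "igC * (sqrt pi / sqrt igB * exp (- 2 * sqrt (igA * igB))) = (sqrt (kappa / (2 * pi)) * sqrt pi / sqrt (kappa / 2)) * (exp (kappa / nu) * exp (- 2 * (kappa / (2 * nu))))"
      using kappa nu by (simp only: igAB(4)) (simp add: igC_def igB_def field_simps)
    show ?thesis unfolding c1 a1 b1 by simp
  qed
  have "((\<lambda>t. igC * (exp (- igA * t - igB / t) / (t * sqrt t))) has_integral 1) {0<..}" using h unfolding eq .
  then have "has_bochner_integral lborel (\<lambda>t. indicator {0<..} t * (igC * (exp (- igA * t - igB / t) / (t * sqrt t)))) 1"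
    using igAB by (intro hk_to_bochner_pos) auto
  moreover have "(\<lambda>t. indicator {0<..} t * (igC * (exp (- igA * t - igB / t) / (t * sqrt t)))) = ig_density nu kappa"
    by (auto simp: fun_eq_iff indicator_def ig_form) (simp add: ig_density_def)
  ultimately show ?thesis by simp
qed

lemma ig_mean: "has_bochner_integral lborel (\<lambda>t. ig_density nu kappa t * t) nu"
proof -
  have h: "((\<lambda>t. igC * (exp (- igA * t - igB / t) / sqrt t)) has_integral igC * (sqrt pi / sqrt igA * exp (- 2 * sqrt (igA * igB)))) {0<..}"
    by (intro has_integral_mult_right J_both igAB)
  have eq: "igC * (sqrt pi / sqrt igA * exp (- 2 * sqrt (igA * igB))) = nu"
  proof -
    have a1: "sqrt (kappa / (2 * pi)) * sqrt pi / sqrt (kappa / (2 * nu\<^sup>2)) = nu"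
      using kappa nu by (simp add: real_sqrt_divide real_sqrt_mult)
    have b1: "exp (kappa / nu) * exp (- 2 * (kappa / (2 * nu))) = 1"
      by (simp add: exp_add[symmetric])
    have c1: "igC * (sqrt pi / sqrt igA * exp (- 2 * sqrt (igA * igB))) = (sqrt (kappa / (2 * pi)) * sqrt pi / sqrt (kappa / (2 * nu\<^sup>2))) * (exp (kappa / nu) * exp (- 2 * (kappa / (2 * nu))))"
      using kappa nu by (simp only: igAB(4)) (simp add: igC_def igA_def field_simps)
    show ?thesis unfolding c1 a1 b1 by simp
  qed
  have "((\<lambda>t. igC * (exp (- igA * t - igB / t) / sqrt t)) has_integral nu) {0<..}" using h unfolding eq .
  then have "has_bochner_integral lborel (\<lambda>t. indicator {0<..} t * (igC * (exp (- igA * t - igB / t) / sqrt t))) nu"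
    using igAB by (intro hk_to_bochner_pos) auto
  moreover have "(\<lambda>t. indicator {0<..} t * (igC * (exp (- igA * t - igB / t) / sqrt t))) = (\<lambda>t. ig_density nu kappa t * t)"
    by (auto simp: fun_eq_iff indicator_def ig_form) (auto simp: ig_density_def)
  ultimately show ?thesis by simp
qed

lemma abs_ln_le: "(t::real) > 0 \<Longrightarrow> \<bar>ln t\<bar> \<le> t + 1 / t"
proof -
  assume t: "t > 0"
  have l1: "ln t \<le> t - 1" using t by (rule ln_le_minus_one)
  have l2: "ln (1 / t) \<le> 1 / t - 1" using t by (intro ln_le_minus_one) auto
  have l3: "ln (1 / t) = - ln t" using t by (simp add: ln_div)
  have p: "0 < 1 / t" using t by simp
  have a: "ln t \<le> t + 1 / t" using l1 p by linarith
  have b: "- ln t \<le> t + 1 / t" using l2 l3 t by linarith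
  show ?thesis using a b by (simp add: abs_le_iff)
qed

lemma exp_div_le:
  fixes t B :: real
  assumes t: "t > 0" and B: "B > 0"
  shows "exp (- B / t) / t \<le> (2 / B) * exp (- (B / 2) / t)"
proof -
  define x where "x = (B / 2) / t"
  have "1 + x \<le> exp x" by (rule exp_ge_add_one_self)
  then have "x \<le> exp x" by linarith
  then have "x / exp x \<le> 1" by (simp add: pos_divide_le_eq)
  then have x1: "x * exp (- x) \<le> 1" by (simp add: exp_minus divide_inverse)
  have e: "exp (- B / t) = exp (- x) * exp (- x)"
    unfolding x_def by (subst exp_add[symmetric]) (simp add: field_simps)
  have "exp (- B / t) / t = (2 / B) * exp (- x) * (x * exp (- x))"
    unfolding e using t B by (simp add: x_def field_simps)
  also have "\<dots> \<le> (2 / B) * exp (- x) * 1"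
    using x1 B by (intro mult_left_mono) auto
  finally show ?thesis by (simp add: x_def)
qed

lemma ig_ln_integrable: "integrable lborel (\<lambda>t. ig_density nu kappa t * ln t)"
proof -
  define H where "H t = exp (- igA * t - (igB / 2) / t) / (t * sqrt t)" for t
  have hH: "(H has_integral (sqrt pi / sqrt (igB / 2) * exp (- 2 * sqrt (igA * (igB / 2))))) {0<..}"
    unfolding H_def[abs_def] using igAB by (intro J_both) auto
  have "has_bochner_integral lborel (\<lambda>x. indicator {0<..} x * H x) (sqrt pi / sqrt (igB / 2) * exp (- 2 * sqrt (igA * (igB / 2))))"
    by (rule hk_to_bochner_pos[OF _ _ hH]) (auto simp: H_def[abs_def])
  then have iH: "integrable lborel (\<lambda>x. indicator {0<..} x * H x)"
    by (auto simp: has_bochner_integral_iff)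
  have iM: "integrable lborel (\<lambda>t. ig_density nu kappa t * t)"
    using ig_mean by (auto simp: has_bochner_integral_iff)
  have "integrable lborel (\<lambda>t. ig_density nu kappa t * t + (igC * (2 / igB)) * (indicator {0<..} t * H t))"
    using iM iH by auto
  then show ?thesis
  proof (rule Bochner_Integration.integrable_bound)
    show "(\<lambda>t. ig_density nu kappa t * ln t) \<in> borel_measurable lborel" by measurable
    show "AE t in lborel. norm (ig_density nu kappa t * ln t) \<le> norm (ig_density nu kappa t * t + (igC * (2 / igB)) * (indicator {0<..} t * H t))"
    proof (rule AE_I2)
      fix t :: real
      show "norm (ig_density nu kappa t * ln t) \<le> norm (ig_density nu kappa t * t + (igC * (2 / igB)) * (indicator {0<..} t * H t))"
      proof (cases "t > 0")
        case False then show ?thesis by (simp add: ig_density_def)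
      next
        case t: True
        have w0: "0 \<le> ig_density nu kappa t" by (rule ig_nonneg)
        have H0: "0 \<le> H t" using t by (simp add: H_def)
        have ee: "exp (- igA * t - igB / t) = exp (- igA * t) * exp (- igB / t)"
          by (subst exp_add[symmetric]) simp
        have ee2: "exp (- igA * t - (igB / 2) / t) = exp (- igA * t) * exp (- (igB / 2) / t)"
          by (subst exp_add[symmetric]) simp
        have "norm (ig_density nu kappa t * ln t) = ig_density nu kappa t * \<bar>ln t\<bar>"
          using w0 by (simp add: abs_mult)
        also have "\<dots> \<le> ig_density nu kappa t * (t + 1 / t)"
          using w0 abs_ln_le[OF t] by (rule mult_left_mono[rotated])
        also have "\<dots> = ig_density nu kappa t * t + igC * ((exp (- igA * t) * (exp (- igB / t) / t)) / (t * sqrt t))"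
          using t unfolding ig_form[OF t] ee by (simp add: field_simps)
        also have "\<dots> \<le> ig_density nu kappa t * t + igC * ((exp (- igA * t) * ((2 / igB) * exp (- (igB / 2) / t))) / (t * sqrt t))"
          using t igAB exp_div_le[OF t igAB(2)]
          by (intro add_left_mono mult_left_mono divide_right_mono) auto
        also have "\<dots> = ig_density nu kappa t * t + (igC * (2 / igB)) * (indicator {0<..} t * H t)"
          using t unfolding H_def ee2 by (simp add: field_simps)
        also have "\<dots> \<le> norm (ig_density nu kappa t * t + (igC * (2 / igB)) * (indicator {0<..} t * H t))"
          unfolding real_norm_def by (rule abs_ge_self)
        finally show ?thesis .
      qed
    qed
  qed
qed

end



lemma gauss_measurable[measurable]: "(\<lambda>x. gauss_density s (x::real^'n)) \<in> borel_measurable borel"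
  unfolding gauss_density_def by measurable

lemma gauss_pos: "s > 0 \<Longrightarrow> 0 < gauss_density s (x::real^'n)"
  by (simp add: gauss_density_def)

lemma gauss_ln:
  assumes "s > 0"
  shows "ln (gauss_density s (x::real^'n)) = - (real CARD('n) / 2) * ln (2 * pi * s) - (norm x)\<^sup>2 / (2 * s)"
  using assms by (simp add: gauss_density_def ln_mult ln_powr)

lemma gauss_int:
  assumes "s > 0"
  shows "has_bochner_integral lborel (\<lambda>x. gauss_density s (x::real^'n)) 1"
  using assms nn_gauss[OF assms] gauss_pos[OF assms]
  by (intro has_bochner_integral_nn_integral) (auto intro: less_imp_le)

lemma gauss_sq_int:
  assumes "s > 0"
  shows "has_bochner_integral lborel (\<lambda>x. gauss_density s (x::real^'n) * (norm x)\<^sup>2) (real CARD('n) * s)"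
proof -
  have "\<And>x::real^'n. 0 \<le> gauss_density s x" using gauss_pos[OF assms] less_imp_le by blast
  then show ?thesis using assms nn_gauss_sq[OF assms]
    by (intro has_bochner_integral_nn_integral) auto
qed

lemma gauss_ent:
  assumes s: "s > 0"
  shows "has_bochner_integral lborel (\<lambda>x. gauss_density s (x::real^'n) * ln (gauss_density s x))
           (- (real CARD('n) / 2) * (ln (2 * pi * s) + 1))"
proof -
  have "has_bochner_integral lborel (\<lambda>x. (- (real CARD('n) / 2) * ln (2 * pi * s)) * gauss_density s (x::real^'n) - (1 / (2 * s)) * (gauss_density s x * (norm x)\<^sup>2))
           ((- (real CARD('n) / 2) * ln (2 * pi * s)) * 1 - (1 / (2 * s)) * (real CARD('n) * s))"
    by (intro has_bochner_integral_diff has_bochner_integral_mult_right gauss_int gauss_sq_int s)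
  moreover have "(- (real CARD('n) / 2) * ln (2 * pi * s)) * 1 - (1 / (2 * s)) * (real CARD('n) * s) = - (real CARD('n) / 2) * (ln (2 * pi * s) + 1)"
    using s by (simp add: field_simps)
  moreover have "\<And>x::real^'n. (- (real CARD('n) / 2) * ln (2 * pi * s)) * gauss_density s x - (1 / (2 * s)) * (gauss_density s x * (norm x)\<^sup>2)
       = gauss_density s x * ln (gauss_density s x)"
    using s by (simp add: gauss_ln field_simps)
  ultimately show ?thesis by simp
qed

lemma gauss_abs_ent:
  assumes s: "s > 0"
  shows "(\<integral>\<^sup>+x. ennreal (norm (gauss_density s (x::real^'n) * ln (gauss_density s x))) \<partial>lborel)
          \<le> ennreal (real CARD('n) / 2 * \<bar>ln (2 * pi * s)\<bar> + real CARD('n) / 2)"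
proof -
  have hb: "has_bochner_integral lborel (\<lambda>x. (real CARD('n) / 2 * \<bar>ln (2 * pi * s)\<bar>) * gauss_density s (x::real^'n) + (1 / (2 * s)) * (gauss_density s x * (norm x)\<^sup>2))
           ((real CARD('n) / 2 * \<bar>ln (2 * pi * s)\<bar>) * 1 + (1 / (2 * s)) * (real CARD('n) * s))"
    by (intro has_bochner_integral_add has_bochner_integral_mult_right gauss_int gauss_sq_int s)
  have "(\<integral>\<^sup>+x. ennreal (norm (gauss_density s (x::real^'n) * ln (gauss_density s x))) \<partial>lborel)
      \<le> (\<integral>\<^sup>+x. ennreal ((real CARD('n) / 2 * \<bar>ln (2 * pi * s)\<bar>) * gauss_density s (x::real^'n) + (1 / (2 * s)) * (gauss_density s x * (norm x)\<^sup>2)) \<partial>lborel)"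
  proof (rule nn_integral_mono)
    fix x :: "real^'n"
    have g: "0 < gauss_density s x" by (rule gauss_pos[OF s])
    have "norm (gauss_density s x * ln (gauss_density s x)) = gauss_density s x * \<bar>ln (gauss_density s x)\<bar>"
      using g by (simp add: abs_mult)
    also have "\<dots> \<le> gauss_density s x * (real CARD('n) / 2 * \<bar>ln (2 * pi * s)\<bar> + (norm x)\<^sup>2 / (2 * s))"
    proof (rule mult_left_mono)
      show "\<bar>ln (gauss_density s x)\<bar> \<le> real CARD('n) / 2 * \<bar>ln (2 * pi * s)\<bar> + (norm x)\<^sup>2 / (2 * s)"
      proof -
        have q: "0 \<le> (norm x)\<^sup>2 / (2 * s)" using s by simp
        have "\<bar>- (real CARD('n) / 2) * ln (2 * pi * s) - (norm x)\<^sup>2 / (2 * s)\<bar> \<le> \<bar>- (real CARD('n) / 2) * ln (2 * pi * s)\<bar> + \<bar>(norm x)\<^sup>2 / (2 * s)\<bar>"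
          by (rule abs_triangle_ineq4)
        also have "\<dots> = real CARD('n) / 2 * \<bar>ln (2 * pi * s)\<bar> + (norm x)\<^sup>2 / (2 * s)"
          using q s by (simp add: abs_mult)
        finally show ?thesis unfolding gauss_ln[OF s] .
      qed
    qed (use g in auto)
    also have "\<dots> = (real CARD('n) / 2 * \<bar>ln (2 * pi * s)\<bar>) * gauss_density s x + (1 / (2 * s)) * (gauss_density s x * (norm x)\<^sup>2)"
      by (simp add: field_simps)
    finally show "ennreal (norm (gauss_density s x * ln (gauss_density s x))) \<le> ennreal ((real CARD('n) / 2 * \<bar>ln (2 * pi * s)\<bar>) * gauss_density s x + (1 / (2 * s)) * (gauss_density s x * (norm x)\<^sup>2))"
      by (rule ennreal_leI)
  qed
  also have "\<dots> = ennreal ((real CARD('n) / 2 * \<bar>ln (2 * pi * s)\<bar>) * 1 + (1 / (2 * s)) * (real CARD('n) * s))"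
  proof -
    have g0: "\<And>x::real^'n. 0 \<le> gauss_density s x" using gauss_pos[OF s] less_imp_le by blast
    show ?thesis
      using hb g0 s
      by (subst nn_integral_eq_integral) (auto simp: has_bochner_integral_iff intro!: AE_I2 add_nonneg_nonneg mult_nonneg_nonneg divide_nonneg_nonneg)
  qed
  also have "(real CARD('n) / 2 * \<bar>ln (2 * pi * s)\<bar>) * 1 + (1 / (2 * s)) * (real CARD('n) * s) = real CARD('n) / 2 * \<bar>ln (2 * pi * s)\<bar> + real CARD('n) / 2"
    using s by simp
  finally show ?thesis .
qed



context
  fixes sg nu kappa :: real
  assumes sg: "sg > 0" and nu: "nu > 0" and kappa: "kappa > 0"
begin

definition "mixQ (x::real^'n) t = ig_density nu kappa t * gauss_density (sg\<^sup>2 * t) x"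

lemma W0: "0 \<le> ig_density nu kappa t" using ig_nonneg nu kappa by blast

lemma mixQ_nonneg: "0 \<le> mixQ x t"
  unfolding mixQ_def
proof (cases "t > 0")
  case True then show "0 \<le> ig_density nu kappa t * gauss_density (sg\<^sup>2 * t) x"
    using W0 gauss_pos[of "sg\<^sup>2 * t" x] sg by (auto intro: mult_nonneg_nonneg less_imp_le)
next
  case False then show "0 \<le> ig_density nu kappa t * gauss_density (sg\<^sup>2 * t) x"
    by (simp add: ig_density_def)
qed

lemma mixQ_meas[measurable]: "(\<lambda>(x, t). mixQ (x::real^'n) t) \<in> borel_measurable (lborel \<Otimes>\<^sub>M lborel)"
  unfolding mixQ_def gauss_density_def by measurable

lemma mix_eq: "mix_density sg nu kappa x = (\<integral>t. mixQ x t \<partial>lborel)"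
  by (simp add: mix_density_def mixQ_def)

lemma inner_gauss: "(\<integral>\<^sup>+x. ennreal (mixQ (x::real^'n) t) \<partial>lborel) = ennreal (ig_density nu kappa t)"
proof (cases "t > 0")
  case True
  have "(\<integral>\<^sup>+x. ennreal (mixQ (x::real^'n) t) \<partial>lborel) = (\<integral>\<^sup>+x. ennreal (ig_density nu kappa t) * ennreal (gauss_density (sg\<^sup>2 * t) (x::real^'n)) \<partial>lborel)"
  proof -
    have g: "\<And>x. 0 \<le> gauss_density (sg\<^sup>2 * t) (x::real^'n)" by (rule less_imp_le, rule gauss_pos) (use True sg in simp)
    show ?thesis unfolding mixQ_def by (intro nn_integral_cong) (simp add: ennreal_mult W0 g)
  qed
  also have "\<dots> = ennreal (ig_density nu kappa t) * (\<integral>\<^sup>+x. ennreal (gauss_density (sg\<^sup>2 * t) (x::real^'n)) \<partial>lborel)"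
    by (rule nn_integral_cmult) measurable
  also have "\<dots> = ennreal (ig_density nu kappa t)"
    using True sg by (simp add: nn_gauss)
  finally show ?thesis .
next
  case False then show ?thesis by (simp add: mixQ_def ig_density_def)
qed

lemma inner_gauss_sq: "(\<integral>\<^sup>+x. ennreal (mixQ (x::real^'n) t * (norm x)\<^sup>2) \<partial>lborel) = ennreal (real CARD('n) * sg\<^sup>2 * (ig_density nu kappa t * t))"
proof (cases "t > 0")
  case True
  have "(\<integral>\<^sup>+x. ennreal (mixQ (x::real^'n) t * (norm x)\<^sup>2) \<partial>lborel) = (\<integral>\<^sup>+x. ennreal (ig_density nu kappa t) * ennreal (gauss_density (sg\<^sup>2 * t) (x::real^'n) * (norm x)\<^sup>2) \<partial>lborel)"
  proof -
    have g: "\<And>x. 0 \<le> gauss_density (sg\<^sup>2 * t) (x::real^'n)" by (rule less_imp_le, rule gauss_pos) (use True sg in simp)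
    show ?thesis unfolding mixQ_def by (intro nn_integral_cong) (simp add: ennreal_mult[symmetric] W0 g mult.assoc)
  qed
  also have "\<dots> = ennreal (ig_density nu kappa t) * (\<integral>\<^sup>+x. ennreal (gauss_density (sg\<^sup>2 * t) (x::real^'n) * (norm x)\<^sup>2) \<partial>lborel)"
    by (rule nn_integral_cmult) measurable
  also have "\<dots> = ennreal (ig_density nu kappa t) * ennreal (real CARD('n) * (sg\<^sup>2 * t))"
    using True sg by (simp add: nn_gauss_sq)
  also have "\<dots> = ennreal (real CARD('n) * sg\<^sup>2 * (ig_density nu kappa t * t))"
    using W0 True by (simp add: ennreal_mult[symmetric] mult_ac)
  finally show ?thesis .
next
  case False then show ?thesis by (simp add: mixQ_def ig_density_def)
qed

lemma PSI: "pair_sigma_finite (lborel::('a::euclidean_space) measure) (lborel::('b::euclidean_space) measure)"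
  by (simp add: pair_sigma_finite_def lborel.sigma_finite_measure_axioms)

lemma total_F: "(\<integral>\<^sup>+x. (\<integral>\<^sup>+t. ennreal (mixQ (x::real^'n) t) \<partial>lborel) \<partial>lborel) = 1"
proof -
  have "(\<integral>\<^sup>+x. (\<integral>\<^sup>+t. ennreal (mixQ (x::real^'n) t) \<partial>lborel) \<partial>lborel) = (\<integral>\<^sup>+t. (\<integral>\<^sup>+x. ennreal (mixQ (x::real^'n) t) \<partial>lborel) \<partial>lborel)"
    by (rule pair_sigma_finite.Fubini'[OF PSI, symmetric]) measurable
  also have "\<dots> = (\<integral>\<^sup>+t. ennreal (ig_density nu kappa t) \<partial>lborel)"
    by (simp add: inner_gauss)
  also have "\<dots> = 1"
    using ig_total[OF nu kappa] W0 by (subst nn_integral_eq_integral) (auto simp: has_bochner_integral_iff)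
  finally show ?thesis .
qed

lemma total_F_sq: "(\<integral>\<^sup>+x. (\<integral>\<^sup>+t. ennreal (mixQ (x::real^'n) t * (norm x)\<^sup>2) \<partial>lborel) \<partial>lborel) = ennreal (real CARD('n) * sg\<^sup>2 * nu)"
proof -
  have "(\<integral>\<^sup>+x. (\<integral>\<^sup>+t. ennreal (mixQ (x::real^'n) t * (norm x)\<^sup>2) \<partial>lborel) \<partial>lborel) = (\<integral>\<^sup>+t. (\<integral>\<^sup>+x. ennreal (mixQ (x::real^'n) t * (norm x)\<^sup>2) \<partial>lborel) \<partial>lborel)"
    by (rule pair_sigma_finite.Fubini'[OF PSI, symmetric]) measurable
  also have "\<dots> = (\<integral>\<^sup>+t. ennreal (real CARD('n) * sg\<^sup>2 * (ig_density nu kappa t * t)) \<partial>lborel)"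
    by (simp add: inner_gauss_sq)
  also have "\<dots> = ennreal (real CARD('n) * sg\<^sup>2 * nu)"
  proof -
    have "has_bochner_integral lborel (\<lambda>t. real CARD('n) * sg\<^sup>2 * (ig_density nu kappa t * t)) (real CARD('n) * sg\<^sup>2 * nu)"
      by (intro has_bochner_integral_mult_right ig_mean nu kappa)
    moreover have "\<And>t. 0 \<le> real CARD('n) * sg\<^sup>2 * (ig_density nu kappa t * t)"
    proof -
      fix t :: real
      show "0 \<le> real CARD('n) * sg\<^sup>2 * (ig_density nu kappa t * t)"
      proof (cases "t > 0")
        case True then show ?thesis using W0[of t] by simp
      next
        case False then show ?thesis by (simp add: ig_density_def)
      qed
    qed
    ultimately show ?thesis
      by (subst nn_integral_eq_integral) (auto simp: has_bochner_integral_iff)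
  qed
  finally show ?thesis .
qed

lemma mixQ_meas_t[measurable]: "mixQ (x::real^'n) \<in> borel_measurable lborel"
  unfolding mixQ_def[abs_def] gauss_density_def by measurable

lemma mix_meas[measurable]: "(mix_density sg nu kappa :: real^'n \<Rightarrow> real) \<in> borel_measurable lborel"
proof -
  have "(\<lambda>x::real^'n. \<integral>t. mixQ x t \<partial>lborel) \<in> borel_measurable lborel"
    by measurable
  then show ?thesis by (simp add: mix_eq[abs_def])
qed

lemma mix_enn: "mix_density sg nu kappa (x::real^'n) = enn2real (\<integral>\<^sup>+t. ennreal (mixQ x t) \<partial>lborel)"
  unfolding mix_eq using mixQ_nonneg by (intro integral_eq_nn_integral) auto

lemma mix_nonneg: "0 \<le> mix_density sg nu kappa (x::real^'n)"
  by (simp add: mix_enn)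

lemma AE_fin: "AE x in (lborel::(real^'n) measure). (\<integral>\<^sup>+t. ennreal (mixQ x t) \<partial>lborel) \<noteq> \<infinity>"
  apply (rule nn_integral_PInf_AE)
  subgoal by measurable
  subgoal using total_F[where 'n='n] by simp
  done

lemma AE_eq: "AE x in (lborel::(real^'n) measure). ennreal (mix_density sg nu kappa x) = (\<integral>\<^sup>+t. ennreal (mixQ x t) \<partial>lborel)"
  by (rule AE_mp[OF AE_fin]) (auto intro!: AE_I2 simp: mix_enn ennreal_enn2real less_top)

lemma AE_Qint: "AE x in (lborel::(real^'n) measure). integrable lborel (mixQ x)"
  by (rule AE_mp[OF AE_fin]) (auto intro!: AE_I2 integrableI_nonneg simp: mixQ_nonneg less_top)

lemma mix_int: "has_bochner_integral lborel (mix_density sg nu kappa :: real^'n \<Rightarrow> real) 1"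
proof -
  have "(\<integral>\<^sup>+x. ennreal (mix_density sg nu kappa (x::real^'n)) \<partial>lborel) = (\<integral>\<^sup>+x. (\<integral>\<^sup>+t. ennreal (mixQ (x::real^'n) t) \<partial>lborel) \<partial>lborel)"
    using AE_eq by (rule nn_integral_cong_AE)
  also have "\<dots> = 1" by (rule total_F)
  finally show ?thesis
    using mix_nonneg by (intro has_bochner_integral_nn_integral) auto
qed

lemma mix_sq_int: "has_bochner_integral lborel (\<lambda>x::real^'n. mix_density sg nu kappa x * (norm x)\<^sup>2) (real CARD('n) * sg\<^sup>2 * nu)"
proof -
  have "(\<integral>\<^sup>+x. ennreal (mix_density sg nu kappa (x::real^'n) * (norm x)\<^sup>2) \<partial>lborel) = (\<integral>\<^sup>+x. (\<integral>\<^sup>+t. ennreal (mixQ (x::real^'n) t * (norm x)\<^sup>2) \<partial>lborel) \<partial>lborel)"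
  proof (rule nn_integral_cong_AE, rule AE_mp[OF AE_eq], rule AE_I2, rule impI)
    fix x :: "real^'n"
    assume elim: "ennreal (mix_density sg nu kappa x) = (\<integral>\<^sup>+t. ennreal (mixQ x t) \<partial>lborel)"
    have "(\<integral>\<^sup>+t. ennreal (mixQ (x::real^'n) t * (norm x)\<^sup>2) \<partial>lborel) = (\<integral>\<^sup>+t. ennreal (mixQ x t) * ennreal ((norm x)\<^sup>2) \<partial>lborel)"
      by (intro nn_integral_cong) (simp add: ennreal_mult mixQ_nonneg)
    also have "\<dots> = (\<integral>\<^sup>+t. ennreal (mixQ x t) \<partial>lborel) * ennreal ((norm x)\<^sup>2)"
      by (rule nn_integral_multc) measurable
    moreover have "ennreal (mix_density sg nu kappa x * (norm x)\<^sup>2) = ennreal (mix_density sg nu kappa x) * ennreal ((norm x)\<^sup>2)"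
      by (rule ennreal_mult[OF mix_nonneg]) simp
    ultimately show "ennreal (mix_density sg nu kappa x * (norm x)\<^sup>2) = (\<integral>\<^sup>+t. ennreal (mixQ x t * (norm x)\<^sup>2) \<partial>lborel)"
      using elim by simp
  qed
  also have "\<dots> = ennreal (real CARD('n) * sg\<^sup>2 * nu)" by (rule total_F_sq)
  finally show ?thesis
    using mix_nonneg sg nu by (intro has_bochner_integral_nn_integral) (auto intro!: AE_I2 mult_nonneg_nonneg)
qed

lemma gibbs_pt:
  fixes y z :: real
  assumes y: "0 \<le> y" and z: "0 < z"
  shows "y * ln z + y - z \<le> y * ln y"
proof (cases "y = 0")
  case True then show ?thesis using z by simp
next
  case False
  then have y: "y > 0" using y by simp
  have "ln (z / y) \<le> z / y - 1" using y z by (intro ln_le_minus_one) auto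
  then have "ln z - ln y \<le> z / y - 1" using y z by (simp add: ln_div)
  then have "y * (ln z - ln y) \<le> y * (z / y - 1)" using y by (intro mult_left_mono) auto
  moreover have "y * (z / y - 1) = z - y" using y by (simp add: field_simps)
  moreover have "y * (ln z - ln y) = y * ln z - y * ln y" by (simp add: right_diff_distrib)
  ultimately show ?thesis by linarith
qed

definition "lowL (x::real^'n) = mix_density sg nu kappa x * ln (gauss_density (sg\<^sup>2 * nu) x) + mix_density sg nu kappa x - gauss_density (sg\<^sup>2 * nu) x"

lemma lowL_le: "lowL x \<le> mix_density sg nu kappa x * ln (mix_density sg nu kappa x)"
  unfolding lowL_def using mix_nonneg gauss_pos[of "sg\<^sup>2 * nu" x] sg nu
  by (intro gibbs_pt) auto

lemma lowL_int: "has_bochner_integral lborel (lowL :: real^'n \<Rightarrow> real) (- (real CARD('n) / 2) * (ln (2 * pi * (sg\<^sup>2 * nu)) + 1))"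
proof -
  define s0 where "s0 = sg\<^sup>2 * nu"
  have s0: "s0 > 0" using sg nu by (simp add: s0_def)
  have "has_bochner_integral lborel (\<lambda>x::real^'n. (- (real CARD('n) / 2) * ln (2 * pi * s0)) * mix_density sg nu kappa x - (1 / (2 * s0)) * (mix_density sg nu kappa x * (norm x)\<^sup>2) + mix_density sg nu kappa x - gauss_density s0 x)
     ((- (real CARD('n) / 2) * ln (2 * pi * s0)) * 1 - (1 / (2 * s0)) * (real CARD('n) * sg\<^sup>2 * nu) + 1 - 1)"
    by (intro has_bochner_integral_diff has_bochner_integral_add has_bochner_integral_mult_right mix_int mix_sq_int gauss_int s0)
  moreover have "(- (real CARD('n) / 2) * ln (2 * pi * s0)) * 1 - (1 / (2 * s0)) * (real CARD('n) * sg\<^sup>2 * nu) + 1 - 1 = - (real CARD('n) / 2) * (ln (2 * pi * s0) + 1)"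
    using s0 sg nu by (simp add: s0_def field_simps)
  moreover have "(\<lambda>x::real^'n. (- (real CARD('n) / 2) * ln (2 * pi * s0)) * mix_density sg nu kappa x - (1 / (2 * s0)) * (mix_density sg nu kappa x * (norm x)\<^sup>2) + mix_density sg nu kappa x - gauss_density s0 x) = lowL"
    unfolding lowL_def s0_def[symmetric] using s0 by (auto simp: fun_eq_iff gauss_ln[OF s0] field_simps)
  ultimately show ?thesis by (simp add: s0_def)
qed

definition "mixR (x::real^'n) t = mixQ x t * ln (gauss_density (sg\<^sup>2 * t) x)"

lemma mixR_meas[measurable]: "(\<lambda>(x, t). mixR (x::real^'n) t) \<in> borel_measurable (lborel \<Otimes>\<^sub>M lborel)"
  unfolding mixR_def mixQ_def gauss_density_def by measurable

lemma mixR_alt: "mixR x t = ig_density nu kappa t * (gauss_density (sg\<^sup>2 * t) x * ln (gauss_density (sg\<^sup>2 * t) x))"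
  by (simp add: mixR_def mixQ_def)

definition "bndB p t = (p / 2 * \<bar>ln (2 * pi * sg\<^sup>2)\<bar> + p / 2) * ig_density nu kappa t + p / 2 * \<bar>ig_density nu kappa t * ln t\<bar>"

lemma bndB_int: "integrable lborel (bndB p)"
  unfolding bndB_def[abs_def] using ig_total[OF nu kappa] ig_ln_integrable[OF nu kappa]
  by (auto simp: has_bochner_integral_iff)

lemma bndB_nonneg: "p \<ge> 0 \<Longrightarrow> 0 \<le> bndB p t"
  unfolding bndB_def using W0[of t] by (intro add_nonneg_nonneg mult_nonneg_nonneg) auto

lemma inner_R_bound: "(\<integral>\<^sup>+x. ennreal (norm (mixR (x::real^'n) t)) \<partial>lborel) \<le> ennreal (bndB (real CARD('n)) t)"
proof (cases "t > 0")
  case t: True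
  have st: "sg\<^sup>2 * t > 0" using sg t by simp
  have "(\<integral>\<^sup>+x. ennreal (norm (mixR (x::real^'n) t)) \<partial>lborel) = (\<integral>\<^sup>+x. ennreal (ig_density nu kappa t) * ennreal (norm (gauss_density (sg\<^sup>2 * t) (x::real^'n) * ln (gauss_density (sg\<^sup>2 * t) x))) \<partial>lborel)"
    unfolding mixR_alt by (intro nn_integral_cong) (simp add: abs_mult ennreal_mult W0 abs_of_nonneg)
  also have "\<dots> = ennreal (ig_density nu kappa t) * (\<integral>\<^sup>+x. ennreal (norm (gauss_density (sg\<^sup>2 * t) (x::real^'n) * ln (gauss_density (sg\<^sup>2 * t) x))) \<partial>lborel)"
    by (rule nn_integral_cmult) measurable
  also have "\<dots> \<le> ennreal (ig_density nu kappa t) * ennreal (real CARD('n) / 2 * \<bar>ln (2 * pi * (sg\<^sup>2 * t))\<bar> + real CARD('n) / 2)"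
    by (intro mult_left_mono gauss_abs_ent st) auto
  also have "\<dots> = ennreal (ig_density nu kappa t * (real CARD('n) / 2 * \<bar>ln (2 * pi * (sg\<^sup>2 * t))\<bar> + real CARD('n) / 2))"
    by (rule ennreal_mult[OF W0, symmetric]) simp
  also have "\<dots> \<le> ennreal (bndB (real CARD('n)) t)"
  proof (rule ennreal_leI)
    have "\<bar>ln (2 * pi * (sg\<^sup>2 * t))\<bar> \<le> \<bar>ln (2 * pi * sg\<^sup>2)\<bar> + \<bar>ln t\<bar>"
    proof -
      have "ln (2 * pi * (sg\<^sup>2 * t)) = ln (2 * pi * sg\<^sup>2) + ln t"
        using sg t by (simp add: ln_mult mult.assoc)
      then show ?thesis by simp
    qed
    then have "ig_density nu kappa t * (real CARD('n) / 2 * \<bar>ln (2 * pi * (sg\<^sup>2 * t))\<bar> + real CARD('n) / 2)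
        \<le> ig_density nu kappa t * (real CARD('n) / 2 * (\<bar>ln (2 * pi * sg\<^sup>2)\<bar> + \<bar>ln t\<bar>) + real CARD('n) / 2)"
      using W0 by (intro mult_left_mono add_right_mono) auto
    also have "\<dots> = bndB (real CARD('n)) t"
      using W0 by (simp add: bndB_def abs_mult field_simps)
    finally show "ig_density nu kappa t * (real CARD('n) / 2 * \<bar>ln (2 * pi * (sg\<^sup>2 * t))\<bar> + real CARD('n) / 2) \<le> bndB (real CARD('n)) t" .
  qed
  finally show ?thesis .
next
  case False then show ?thesis by (simp add: mixR_alt ig_density_def)
qed

lemma mixR_int: "integrable (lborel \<Otimes>\<^sub>M lborel) (\<lambda>(x, t). mixR (x::real^'n) t)"
proof (subst integrable_iff_bounded, intro conjI)
  show "(\<lambda>(x, t). mixR (x::real^'n) t) \<in> borel_measurable (lborel \<Otimes>\<^sub>M lborel)" by measurable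
  have "(\<integral>\<^sup>+z. ennreal (norm ((\<lambda>(x, t). mixR (x::real^'n) t) z)) \<partial>(lborel \<Otimes>\<^sub>M lborel))
      = (\<integral>\<^sup>+t. (\<integral>\<^sup>+x. ennreal (norm (mixR (x::real^'n) t)) \<partial>lborel) \<partial>lborel)"
    by (subst pair_sigma_finite.nn_integral_snd[OF PSI, symmetric]) (auto simp: case_prod_beta)
  also have "\<dots> \<le> (\<integral>\<^sup>+t. ennreal (bndB (real CARD('n)) t) \<partial>lborel)"
    by (intro nn_integral_mono inner_R_bound)
  also have "\<dots> = ennreal (\<integral>t. bndB (real CARD('n)) t \<partial>lborel)"
    by (intro nn_integral_eq_integral bndB_int) (auto simp: bndB_nonneg)
  also have "\<dots> < \<infinity>" by simp
  finally show "(\<integral>\<^sup>+z. ennreal (norm ((\<lambda>(x, t). mixR (x::real^'n) t) z)) \<partial>(lborel \<Otimes>\<^sub>M lborel)) < \<infinity>" .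
qed

lemma inner_R_int: "(\<integral>x. mixR (x::real^'n) t \<partial>lborel) = - (real CARD('n) / 2) * (ln (2 * pi * sg\<^sup>2) + 1) * ig_density nu kappa t - real CARD('n) / 2 * (ig_density nu kappa t * ln t)"
proof (cases "t > 0")
  case t: True
  have st: "sg\<^sup>2 * t > 0" using sg t by simp
  have "(\<integral>x. mixR (x::real^'n) t \<partial>lborel) = ig_density nu kappa t * (\<integral>x. gauss_density (sg\<^sup>2 * t) (x::real^'n) * ln (gauss_density (sg\<^sup>2 * t) x) \<partial>lborel)"
    unfolding mixR_alt by (rule integral_mult_right_zero)
  also have "\<dots> = ig_density nu kappa t * (- (real CARD('n) / 2) * (ln (2 * pi * (sg\<^sup>2 * t)) + 1))"
    using gauss_ent[OF st, where 'n='n] by (simp add: has_bochner_integral_iff)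
  also have "ln (2 * pi * (sg\<^sup>2 * t)) = ln (2 * pi * sg\<^sup>2) + ln t"
    using sg t by (simp add: ln_mult mult.assoc)
  finally show ?thesis by (simp add: algebra_simps)
next
  case False then show ?thesis by (simp add: mixR_alt ig_density_def)
qed

lemma P_total: "(\<integral>x. (\<integral>t. mixR (x::real^'n) t \<partial>lborel) \<partial>lborel) = - (real CARD('n) / 2) * (ln (2 * pi * sg\<^sup>2) + 1) - real CARD('n) / 2 * ig_expect nu kappa ln"
proof -
  have "(\<integral>x. (\<integral>t. mixR (x::real^'n) t \<partial>lborel) \<partial>lborel) = (\<integral>t. (\<integral>x. mixR (x::real^'n) t \<partial>lborel) \<partial>lborel)"
    by (rule pair_sigma_finite.Fubini_integral[OF PSI, symmetric]) (use mixR_int in simp)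
  also have "\<dots> = (\<integral>t. - (real CARD('n) / 2) * (ln (2 * pi * sg\<^sup>2) + 1) * ig_density nu kappa t - real CARD('n) / 2 * (ig_density nu kappa t * ln t) \<partial>lborel)"
    by (simp add: inner_R_int)
  also have "\<dots> = - (real CARD('n) / 2) * (ln (2 * pi * sg\<^sup>2) + 1) * 1 - real CARD('n) / 2 * ig_expect nu kappa ln"
  proof -
    have "has_bochner_integral lborel (\<lambda>t. - (real CARD('n) / 2) * (ln (2 * pi * sg\<^sup>2) + 1) * ig_density nu kappa t - real CARD('n) / 2 * (ig_density nu kappa t * ln t))
       (- (real CARD('n) / 2) * (ln (2 * pi * sg\<^sup>2) + 1) * 1 - real CARD('n) / 2 * ig_expect nu kappa ln)"
      unfolding ig_expect_def
      by (intro has_bochner_integral_diff has_bochner_integral_mult_right ig_total nu kappa has_bochner_integral_integrable ig_ln_integrable)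
    then show ?thesis by (simp add: has_bochner_integral_iff)
  qed
  finally show ?thesis by simp
qed

lemma P_int: "integrable lborel (\<lambda>x::real^'n. \<integral>t. mixR x t \<partial>lborel)"
  by (rule pair_sigma_finite.integrable_fst[OF PSI]) (use mixR_int in simp)

lemma AE_Rint: "AE x in (lborel::(real^'n) measure). integrable lborel (mixR x)"
  by (rule pair_sigma_finite.AE_integrable_fst[OF PSI]) (use mixR_int in simp)

lemma mixR_meas_t[measurable]: "mixR (x::real^'n) \<in> borel_measurable lborel"
  unfolding mixR_def[abs_def] mixQ_def gauss_density_def by measurable

lemma pointwise_P: "AE x in (lborel::(real^'n) measure). mix_density sg nu kappa x * ln (mix_density sg nu kappa x) \<le> (\<integral>t. mixR x t \<partial>lborel)"
proof (rule AE_mp[OF AE_Qint], rule AE_mp[OF AE_Rint], rule AE_I2, intro impI)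
  fix x :: "real^'n"
  assume iR: "integrable lborel (mixR x)" and iQ: "integrable lborel (mixQ x)"
  define m where "m = mix_density sg nu kappa x"
  have m_eq: "m = (\<integral>t. mixQ x t \<partial>lborel)" by (simp add: m_def mix_eq)
  have m0: "0 \<le> m" by (simp add: m_def mix_nonneg)
  show "mix_density sg nu kappa x * ln (mix_density sg nu kappa x) \<le> (\<integral>t. mixR x t \<partial>lborel)"
  proof (cases "m = 0")
    case True
    then have "AE t in lborel. mixQ x t = 0"
      using iQ mixQ_nonneg m_eq by (subst integral_nonneg_eq_0_iff_AE[symmetric]) auto
    then have "AE t in lborel. mixR x t = 0"
      by (rule AE_mp) (auto intro!: AE_I2 simp: mixR_def)
    note ae = this
    have "(\<integral>t. mixR x t \<partial>lborel) = 0"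
      using ae by (rule integral_eq_zero_AE)
    then show ?thesis using True by (simp add: m_def)
  next
    case False
    then have mp: "m > 0" using m0 by simp
    have pt: "ln m * mixQ x t + mixQ x t - m * ig_density nu kappa t \<le> mixR x t" for t
    proof (cases "t > 0")
      case t: True
      have G: "0 < gauss_density (sg\<^sup>2 * t) x" using sg t by (intro gauss_pos) simp
      have "gauss_density (sg\<^sup>2 * t) x * ln m + gauss_density (sg\<^sup>2 * t) x - m \<le> gauss_density (sg\<^sup>2 * t) x * ln (gauss_density (sg\<^sup>2 * t) x)"
        using G mp by (intro gibbs_pt) auto
      then have "ig_density nu kappa t * (gauss_density (sg\<^sup>2 * t) x * ln m + gauss_density (sg\<^sup>2 * t) x - m) \<le> ig_density nu kappa t * (gauss_density (sg\<^sup>2 * t) x * ln (gauss_density (sg\<^sup>2 * t) x))"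
        by (rule mult_left_mono) (rule W0)
      then show ?thesis by (simp add: mixR_alt mixQ_def algebra_simps)
    next
      case False then show ?thesis by (simp add: mixR_def mixQ_def ig_density_def)
    qed
    have iW: "integrable lborel (ig_density nu kappa)"
      using ig_total[OF nu kappa] by (simp add: has_bochner_integral_iff)
    have "(\<integral>t. ln m * mixQ x t + mixQ x t - m * ig_density nu kappa t \<partial>lborel) \<le> (\<integral>t. mixR x t \<partial>lborel)"
      using iQ iR iW pt by (intro integral_mono) auto
    moreover have "(\<integral>t. ln m * mixQ x t + mixQ x t - m * ig_density nu kappa t \<partial>lborel) = ln m * m + m - m * 1"
    proof -
      have "has_bochner_integral lborel (\<lambda>t. ln m * mixQ x t + mixQ x t - m * ig_density nu kappa t) (ln m * m + m - m * 1)"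
        unfolding m_eq
        by (intro has_bochner_integral_diff has_bochner_integral_add has_bochner_integral_mult_right ig_total nu kappa has_bochner_integral_integrable iQ)
      then show ?thesis by (simp add: has_bochner_integral_iff)
    qed
    ultimately show ?thesis by (simp add: m_def[symmetric] mult.commute)
  qed
qed

lemma ent_int: "integrable lborel (\<lambda>x::real^'n. mix_density sg nu kappa x * ln (mix_density sg nu kappa x))"
proof -
  have iL: "integrable lborel (lowL :: real^'n \<Rightarrow> real)"
    using lowL_int[where 'n='n] by (simp add: has_bochner_integral_iff)
  have "integrable lborel (\<lambda>x::real^'n. \<bar>lowL x\<bar> + \<bar>\<integral>t. mixR x t \<partial>lborel\<bar>)"
    using iL P_int by auto
  then show ?thesis
  proof (rule Bochner_Integration.integrable_bound)
    show "(\<lambda>x::real^'n. mix_density sg nu kappa x * ln (mix_density sg nu kappa x)) \<in> borel_measurable lborel"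
      by measurable
    show "AE x in lborel. norm (mix_density sg nu kappa x * ln (mix_density sg nu kappa x)) \<le> norm (\<bar>lowL x\<bar> + \<bar>\<integral>t. mixR (x::real^'n) t \<partial>lborel\<bar>)"
    proof (rule AE_mp[OF pointwise_P], rule AE_I2, rule impI)
      fix x :: "real^'n"
      assume "mix_density sg nu kappa x * ln (mix_density sg nu kappa x) \<le> (\<integral>t. mixR x t \<partial>lborel)"
      moreover have "lowL x \<le> mix_density sg nu kappa x * ln (mix_density sg nu kappa x)" by (rule lowL_le)
      ultimately show "norm (mix_density sg nu kappa x * ln (mix_density sg nu kappa x)) \<le> norm (\<bar>lowL x\<bar> + \<bar>\<integral>t. mixR x t \<partial>lborel\<bar>)"
        by simp
    qed
  qed
qed

lemma ent_lower: "- (real CARD('n) / 2) * (ln (2 * pi * (sg\<^sup>2 * nu)) + 1) \<le> (\<integral>x. mix_density sg nu kappa (x::real^'n) * ln (mix_density sg nu kappa x) \<partial>lborel)"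
proof -
  have "(\<integral>x. lowL (x::real^'n) \<partial>lborel) \<le> (\<integral>x. mix_density sg nu kappa (x::real^'n) * ln (mix_density sg nu kappa x) \<partial>lborel)"
    using lowL_int ent_int lowL_le by (intro integral_mono) (auto simp: has_bochner_integral_iff)
  then show ?thesis using lowL_int[where 'n='n] by (simp add: has_bochner_integral_iff)
qed

lemma ent_upper: "(\<integral>x. mix_density sg nu kappa (x::real^'n) * ln (mix_density sg nu kappa x) \<partial>lborel) \<le> - (real CARD('n) / 2) * (ln (2 * pi * sg\<^sup>2) + 1) - real CARD('n) / 2 * ig_expect nu kappa ln"
proof -
  have "(\<integral>x. mix_density sg nu kappa (x::real^'n) * ln (mix_density sg nu kappa x) \<partial>lborel) \<le> (\<integral>x. (\<integral>t. mixR (x::real^'n) t \<partial>lborel) \<partial>lborel)"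
    using ent_int P_int pointwise_P by (intro integral_mono_AE) auto
  then show ?thesis by (simp add: P_total)
qed

end

lemma ln_e_mult: "X > 0 \<Longrightarrow> ln (2 * pi * exp 1 * X) = ln (2 * pi * X) + 1"
  by (simp add: ln_mult)

theorem lemma4:
  fixes lambda sg mu u :: real
  assumes "lambda > 0" and "sg > 0" and "mu > 0"
    and "u = mu / sg\<^sup>2"
  defines "p \<equiv> real CARD('n)"
    and "nu \<equiv> lambda / mu" and "kappa \<equiv> lambda\<^sup>2 / sg\<^sup>2"
  defines "hN \<equiv> diff_entropy (mix_density sg nu kappa :: real ^ 'n \<Rightarrow> real)"
    and "hlow \<equiv> p / 2 * ln (2 * pi * exp 1 * sg\<^sup>2) + p / 2 * ig_expect nu kappa ln"
    and "hup \<equiv> p / 2 * ln (2 * pi * exp 1 * (lambda / u))"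
  shows "hlow \<le> hN \<and> hN \<le> hup \<and>
         0 \<le> hN - hlow \<and> hN - hlow \<le> hup - hlow \<and>
         hup - hlow \<le> p / 2 * (ln (ig_expect nu kappa (\<lambda>t. t)) - ig_expect nu kappa ln)"
proof -
  have sg: "sg > 0" and nu: "nu > 0" and kappa: "kappa > 0"
    using assms(1-3) by (auto simp: nu_def kappa_def)
  have lu: "lambda / u = sg\<^sup>2 * nu"
    using assms(1-3) unfolding assms(4) nu_def by (simp add: field_simps)
  have s0: "sg\<^sup>2 * nu > 0" using sg nu by simp
  have s1: "sg\<^sup>2 > 0" using sg by simp
  have up: "hN \<le> hup"
    using ent_lower[OF sg nu kappa, where 'n='n]
    unfolding hN_def hup_def diff_entropy_def lu ln_e_mult[OF s0] p_def by simp
  have lo: "hlow \<le> hN"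
    using ent_upper[OF sg nu kappa, where 'n='n]
    unfolding hN_def hlow_def diff_entropy_def ln_e_mult[OF s1] p_def by simp
  have mean: "ig_expect nu kappa (\<lambda>t. t) = nu"
    using ig_mean[OF nu kappa] by (simp add: ig_expect_def has_bochner_integral_iff)
  have last: "hup - hlow = p / 2 * (ln (ig_expect nu kappa (\<lambda>t. t)) - ig_expect nu kappa ln)"
    unfolding hup_def hlow_def lu mean ln_e_mult[OF s0] ln_e_mult[OF s1]
    using sg nu by (simp add: ln_mult algebra_simps)
  show ?thesis using up lo last by simp
qed


end
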